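(* Fix $t\in\{1,\dots,M\}$ and let $z^*\in F(\mathcal{T}_t)$. Set $r_t=\min\{d_{sep}(z^*,C_t),\ d_{esc}(z^*,C_t)\}$. Then every $z\in B(z^*,r_t)$ satisfies $K_t(z)=K_t(z^* )$.
   Context: Fix reals $W,H>0$, integers $N\ge N_m\ge 2$, and widths $w_i>0$, heights $h_i>0$ for $1\le i\le N_m$. Points of $\mathbb{R}^{2N}$ are written $z=(x,y)$ with $x=(x_1,\dots,x_N)$, $y=(y_1,\dots,y_N)$. For $1\le i\le N_m$ let $B_i^x=\{z: 0\le x_i\le W-w_i\}$, $B_i^y=\{z: 0\le y_i\le H-h_i\}$; for $i\neq j$ let $B_{i,j}=B_i^x\cap B_i^y\cap B_j^x\cap B_j^y$, $O^x_{i,j}=\{z: x_i+w_i\le x_j\}$, $O^y_{i,j}=\{z: y_i+h_i\le y_j\}$. Define the closed convex sets $C_{i,j,\mathsf{L}}=O^x_{i,j}\cap B_{i,j}$, $C_{i,j,\mathsf{R}}=O^x_{j,i}\cap B_{i,j}$, $C_{i,j,\mathsf{B}}=O^y_{i,j}\cap B_{i,j}$, $C_{i,j,\mathsf{A}}=O^y_{j,i}\cap B_{i,j}$ (assumed nonempty) and $C_{i,j}=C_{i,j,\mathsf{L}}\cup C_{i,j,\mathsf{R}}\cup C_{i,j,\mathsf{B}}\cup C_{i,j,\mathsf{A}}$. Enumerate the pairs $1\le i<j\le N_m$ by $t=1,\dots,M$ and write $C_t=C_{i,j}$, $C_{t,k}=C_{i,j,k}$ for $k\in\{\mathsf{L},\mathsf{R},\mathsf{B},\mathsf{A}\}$.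 With $\|\cdot\|$ the Euclidean norm and $\mathrm{d}(z,C)=\inf_{c\in C}\|z-c\|$: $\mathcal{P}_t(z)=\{c\in C_t:\|z-c\|=\mathrm{d}(z,C_t)\}$ (set-valued metric projection), $P_{t,k}(z)$ is the unique nearest point of $C_{t,k}$ to $z$; for a fixed relaxation parameter $\lambda\in(0,2)$, $\mathcal{T}_t(z)=\{z+\lambda(p-z):p\in\mathcal{P}_t(z)\}$ and $F(\mathcal{T}_t)=\{z: z\in\mathcal{T}_t(z)\}$. Active indices: $K_t(z)=\{k\in\{\mathsf{L},\mathsf{R},\mathsf{B},\mathsf{A}\}: P_{t,k}(z)\in\mathcal{P}_t(z)\}$. Escaping distance: $d_{esc}(z^*,C_t)=\inf\{\|z-z^*\| : z\notin C_{t,k}\text{ for some }k\in K_t(z^* )\}$. Separating distance: $d_{sep}(z^*,C_t)=\min\{\mathrm{d}(z^*,C_{t,k}) : k\notin K_t(z^* )\}$. $B(z,r)=\{z':\|z'-z\|<r\}$ is the open ball (empty if $r=0$). *)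

theory Defs
  imports "HOL-Analysis.Analysis" "HOL-Library.Extended_Real"
begin

text \<open>Points of R^{2N} are pairs z = (x, y) of vectors x, y :: real^'n, where the finite
  coordinate type 'n has CARD('n) = N elements.  The product norm is the Euclidean norm
  on R^{2N}.  Boxes are indexed by a subset I of 'n (of size N_m); 'n is linearly
  ordered so that pairs i < j make sense.\<close>

type_synonym 'n point = "(real^'n) \<times> (real^'n)"

datatype label = L | R | Bel | Abv

definition Bx :: "real \<Rightarrow> ('n::finite \<Rightarrow> real) \<Rightarrow> 'n \<Rightarrow> 'n point set" where
  "Bx W w i = {z. 0 \<le> fst z $ i \<and> fst z $ i \<le> W - w i}"

definition By :: "real \<Rightarrow> ('n::finite \<Rightarrow> real) \<Rightarrow> 'n \<Rightarrow> 'n point set" where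
  "By H h i = {z. 0 \<le> snd z $ i \<and> snd z $ i \<le> H - h i}"

definition Bij :: "real \<Rightarrow> real \<Rightarrow> ('n::finite \<Rightarrow> real) \<Rightarrow> ('n \<Rightarrow> real) \<Rightarrow> 'n \<Rightarrow> 'n \<Rightarrow> 'n point set" where
  "Bij W H w h i j = Bx W w i \<inter> By H h i \<inter> Bx W w j \<inter> By H h j"

definition Ox :: "('n::finite \<Rightarrow> real) \<Rightarrow> 'n \<Rightarrow> 'n \<Rightarrow> 'n point set" where
  "Ox w i j = {z. fst z $ i + w i \<le> fst z $ j}"

definition Oy :: "('n::finite \<Rightarrow> real) \<Rightarrow> 'n \<Rightarrow> 'n \<Rightarrow> 'n point set" where
  "Oy h i j = {z. snd z $ i + h i \<le> snd z $ j}"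

definition Ck :: "real \<Rightarrow> real \<Rightarrow> ('n::finite \<Rightarrow> real) \<Rightarrow> ('n \<Rightarrow> real) \<Rightarrow> 'n \<Rightarrow> 'n \<Rightarrow> label \<Rightarrow> 'n point set" where
  "Ck W H w h i j k = (case k of
      L \<Rightarrow> Ox w i j \<inter> Bij W H w h i j
    | R \<Rightarrow> Ox w j i \<inter> Bij W H w h i j
    | Bel \<Rightarrow> Oy h i j \<inter> Bij W H w h i j
    | Abv \<Rightarrow> Oy h j i \<inter> Bij W H w h i j)"

definition Cu :: "real \<Rightarrow> real \<Rightarrow> ('n::finite \<Rightarrow> real) \<Rightarrow> ('n \<Rightarrow> real) \<Rightarrow> 'n \<Rightarrow> 'n \<Rightarrow> 'n point set" where
  "Cu W H w h i j = (\<Union>k. Ck W H w h i j k)"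

definition proj_set :: "'a::metric_space set \<Rightarrow> 'a \<Rightarrow> 'a set" where
  "proj_set C z = {c \<in> C. dist z c = infdist z C}"

definition relax_op :: "real \<Rightarrow> 'a::real_normed_vector set \<Rightarrow> 'a \<Rightarrow> 'a set" where
  "relax_op lam C z = {z + lam *\<^sub>R (p - z) | p. p \<in> proj_set C z}"

definition fixpts :: "('a \<Rightarrow> 'a set) \<Rightarrow> 'a set" where
  "fixpts T = {z. z \<in> T z}"

text \<open>Active indices K_t(z); P_{t,k}(z) is the (unique) nearest point closest_point.\<close>
definition active :: "real \<Rightarrow> real \<Rightarrow> ('n::finite \<Rightarrow> real) \<Rightarrow> ('n \<Rightarrow> real) \<Rightarrow> 'n \<Rightarrow> 'n \<Rightarrow> 'n point \<Rightarrow> label set" where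
  "active W H w h i j z =
     {k. closest_point (Ck W H w h i j k) z \<in> proj_set (Cu W H w h i j) z}"

definition d_esc :: "real \<Rightarrow> real \<Rightarrow> ('n::finite \<Rightarrow> real) \<Rightarrow> ('n \<Rightarrow> real) \<Rightarrow> 'n \<Rightarrow> 'n \<Rightarrow> 'n point \<Rightarrow> real" where
  "d_esc W H w h i j zs =
     Inf {norm (z - zs) | z. \<exists>k \<in> active W H w h i j zs. z \<notin> Ck W H w h i j k}"

text \<open>Separating distance (a minimum over a finite set of labels; the minimum over the
  empty set is taken to be +\<infinity>, hence the value is in ereal).\<close>
definition d_sep :: "real \<Rightarrow> real \<Rightarrow> ('n::finite \<Rightarrow> real) \<Rightarrow> ('n \<Rightarrow> real) \<Rightarrow> 'n \<Rightarrow> 'n \<Rightarrow> 'n point \<Rightarrow> ereal" where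
  "d_sep W H w h i j zs =
     (INF k \<in> - active W H w h i j zs. ereal (infdist zs (Ck W H w h i j k)))"

definition open_ball_er :: "'a::metric_space \<Rightarrow> ereal \<Rightarrow> 'a set" where
  "open_ball_er c r = {z. ereal (dist z c) < r}"

end

theory Submission
  imports Defs
begin

lemma closed_Ck: "closed (Ck W H w h i j k)"
proof -
  have c1: "closed {z::'a::finite point. fst z $ a + c \<le> fst z $ b}" for a b c
    by (intro closed_Collect_le continuous_on_add continuous_on_const continuous_on_component continuous_on_fst continuous_on_snd continuous_on_id)
  have c2: "closed {z::'a::finite point. snd z $ a + c \<le> snd z $ b}" for a b c
    by (intro closed_Collect_le continuous_on_add continuous_on_const continuous_on_component continuous_on_fst continuous_on_snd continuous_on_id)
  have c3: "closed {z::'a::finite point. 0 \<le> fst z $ a \<and> fst z $ a \<le> c}" for a c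
    by (intro closed_Collect_conj closed_Collect_le continuous_on_const continuous_on_component continuous_on_fst continuous_on_snd continuous_on_id)
  have c4: "closed {z::'a::finite point. 0 \<le> snd z $ a \<and> snd z $ a \<le> c}" for a c
    by (intro closed_Collect_conj closed_Collect_le continuous_on_const continuous_on_component continuous_on_fst continuous_on_snd continuous_on_id)
  have "closed (Bij W H w h i j)"
    unfolding Bij_def Bx_def By_def by (intro closed_Int c3 c4)
  then show ?thesis
    unfolding Ck_def Ox_def Oy_def
    by (cases k) (auto intro!: closed_Int c1 c2)
qed

lemma proj_self: "z \<in> C \<Longrightarrow> proj_set C z = {z}"
  unfolding proj_set_def by (auto simp: infdist_zero)

lemma active_char:
  assumes "z \<in> Cu W H w h i j" "\<forall>k. Ck W H w h i j k \<noteq> {}"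
  shows "k \<in> active W H w h i j z \<longleftrightarrow> z \<in> Ck W H w h i j k"
proof -
  have "k \<in> active W H w h i j z \<longleftrightarrow> closest_point (Ck W H w h i j k) z = z"
    unfolding active_def using proj_self[OF assms(1)] by auto
  also have "\<dots> \<longleftrightarrow> z \<in> Ck W H w h i j k"
    using closest_point_self[of z "Ck W H w h i j k"]
      closest_point_in_set[OF closed_Ck assms(2)[rule_format, of k]]
    by metis
  finally show ?thesis .
qed

theorem mainTheorem2:
  fixes W H lam :: real
    and I :: "'n::{finite,linorder} set"
    and w h :: "'n \<Rightarrow> real"
    and i j :: 'n
    and zs :: "'n point"
  assumes W: "W > 0" and H: "H > 0"
    and I2: "card I \<ge> 2"
    and wpos: "\<forall>k\<in>I. w k > 0" and hpos: "\<forall>k\<in>I. h k > 0"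
    and nonempty: "\<forall>a\<in>I. \<forall>b\<in>I. a \<noteq> b \<longrightarrow> (\<forall>k. Ck W H w h a b k \<noteq> {})"
    and lam: "0 < lam" "lam < 2"
    and ij: "i \<in> I" "j \<in> I" "i < j"
    and fixed: "zs \<in> fixpts (relax_op lam (Cu W H w h i j))"
  shows "\<forall>z \<in> open_ball_er zs (min (d_sep W H w h i j zs) (ereal (d_esc W H w h i j zs))).
           active W H w h i j z = active W H w h i j zs"
proof
  fix z assume zb: "z \<in> open_ball_er zs (min (d_sep W H w h i j zs) (ereal (d_esc W H w h i j zs)))"
  have ne: "\<forall>k. Ck W H w h i j k \<noteq> {}" using nonempty ij by auto
  obtain p where p: "p \<in> proj_set (Cu W H w h i j) zs" "zs = zs + lam *\<^sub>R (p - zs)"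
    using fixed unfolding fixpts_def relax_op_def by auto
  have "lam *\<^sub>R (p - zs) = 0" using p(2) by (metis add_cancel_left_right)
  then have "p = zs" using lam by auto
  then have zsC: "zs \<in> Cu W H w h i j" using p(1) unfolding proj_set_def by auto
  have d1: "dist z zs < d_esc W H w h i j zs" and d2: "ereal (dist z zs) < d_sep W H w h i j zs"
    using zb unfolding open_ball_er_def by auto
  have inK: "z \<in> Ck W H w h i j k" if "k \<in> active W H w h i j zs" for k
  proof (rule ccontr)
    assume "z \<notin> Ck W H w h i j k"
    then have "norm (z - zs) \<in> {norm (z - zs) | z. \<exists>k \<in> active W H w h i j zs. z \<notin> Ck W H w h i j k}"
      using that by blast
    then have "d_esc W H w h i j zs \<le> norm (z - zs)"
      unfolding d_esc_def by (intro cInf_lower) (auto intro: bdd_belowI[of _ 0])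
    then show False using d1 by (simp add: dist_norm)
  qed
  have outK: "z \<notin> Ck W H w h i j k" if "k \<notin> active W H w h i j zs" for k
  proof
    assume zk: "z \<in> Ck W H w h i j k"
    have "d_sep W H w h i j zs \<le> ereal (infdist zs (Ck W H w h i j k))"
      unfolding d_sep_def using that by (intro INF_lower) auto
    moreover have "infdist zs (Ck W H w h i j k) \<le> dist zs z" using zk by (rule infdist_le)
    ultimately have "d_sep W H w h i j zs \<le> ereal (dist z zs)"
      by (metis dist_commute ereal_less_eq(3) order_trans)
    then show False using d2 by simp
  qed
  obtain k0 where "k0 \<in> active W H w h i j zs"
    using zsC unfolding Cu_def by (auto simp: active_char[OF zsC ne])
  then have zC: "z \<in> Cu W H w h i j" using inK unfolding Cu_def by blast
  show "active W H w h i j z = active W H w h i j zs"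
    using inK outK by (metis active_char[OF zC ne] subsetI subset_antisym)
qed

end
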